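(* Let $G$ be a compact abelian group with discrete dual group $\Gamma$, let $N \in \mathbb{N}$, let $E \subset \Gamma$ be $N$-PR and let $\gamma \in \Gamma$ satisfy $\langle E \rangle \cap \langle \gamma \rangle = \{1\}$. Then $\gamma E = \{\gamma \gamma' : \gamma' \in E\}$ is also $N$-PR.
   Context: Characters are written multiplicatively; $\langle S \rangle$ denotes the subgroup generated by $S$. $\mathbb{Z}_N$ is identified with the $N$-th roots of unity in the unit circle $\mathbb{T}$. A subset $E \subset \Gamma$ is $N$-PR if for every function $\varphi: E \to \mathbb{Z}_N$ there exists $x \in G$ with $\varphi(\gamma) = \gamma(x)$ for all $\gamma \in E$. *)

theory Defs
  imports "HOL-Analysis.Analysis"
begin

text \<open>A compact abelian group G is modelled as a type 'g of class
  topological_group_add, ab_group_add, t2_space with compact UNIV (written additively).\<close>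

definition is_character :: "('g::{topological_group_add, ab_group_add} \<Rightarrow> complex) \<Rightarrow> bool" where
  "is_character c \<longleftrightarrow> continuous_on UNIV c \<and> (\<forall>x. norm (c x) = 1) \<and>
     (\<forall>x y. c (x + y) = c x * c y)"

definition dual_group :: "('g::{topological_group_add, ab_group_add} \<Rightarrow> complex) set" where
  "dual_group = {c. is_character c}"

inductive_set gen_subgroup :: "('g \<Rightarrow> complex) set \<Rightarrow> ('g \<Rightarrow> complex) set"
  for S :: "('g \<Rightarrow> complex) set" where
  one: "(\<lambda>x. 1) \<in> gen_subgroup S"
| base: "c \<in> S \<Longrightarrow> c \<in> gen_subgroup S"
| mult: "c \<in> gen_subgroup S \<Longrightarrow> \<psi> \<in> gen_subgroup S \<Longrightarrow> (\<lambda>x. c x * \<psi> x) \<in> gen_subgroup S"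
| inv: "c \<in> gen_subgroup S \<Longrightarrow> (\<lambda>x. inverse (c x)) \<in> gen_subgroup S"

text \<open>Z_N identified with the N-th roots of unity.\<close>
definition roots_of_unity :: "nat \<Rightarrow> complex set" where
  "roots_of_unity N = {z. z ^ N = 1}"

definition N_PR :: "nat \<Rightarrow> ('g \<Rightarrow> complex) set \<Rightarrow> bool" where
  "N_PR N E \<longleftrightarrow> (\<forall>\<phi>. (\<forall>c\<in>E. \<phi> c \<in> roots_of_unity N) \<longrightarrow>
      (\<exists>x. \<forall>c\<in>E. \<phi> c = c x))"

definition translate_set :: "('g \<Rightarrow> complex) \<Rightarrow> ('g \<Rightarrow> complex) set \<Rightarrow> ('g \<Rightarrow> complex) set" where
  "translate_set \<gamma> E = (\<lambda>c. \<lambda>x. \<gamma> x * c x) ` E"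

end

theory Submission
  imports Defs
begin

definition rsubg :: "real set \<Rightarrow> bool" where
  "rsubg P \<longleftrightarrow> closed P \<and> 0 \<in> P \<and> (\<forall>x\<in>P. \<forall>y\<in>P. x + y \<in> P) \<and> (\<forall>x\<in>P. -x \<in> P)"

lemma rsubg_int_mult:
  assumes "rsubg P" "a \<in> P" shows "of_int j * a \<in> P"
proof -
  have nat: "of_nat n * a \<in> P" for n :: nat
    by (induction n) (use assms in \<open>auto simp: rsubg_def distrib_right\<close>)
  show ?thesis
  proof (cases "j \<ge> 0")
    case True then show ?thesis using nat[of "nat j"] by simp
  next
    case False
    then have "- (of_nat (nat (-j)) * a) \<in> P" using nat[of "nat (-j)"] assms by (auto simp: rsubg_def)
    then show ?thesis using False by simp
  qed
qed

lemma rsubg_cases: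
  assumes P: "rsubg P" and p: "p \<in> P" "p > 0"
  shows "P = UNIV \<or> (\<exists>a>0. P = range (\<lambda>j::int. of_int j * a))"
proof -
  define Q where "Q = {t\<in>P. t > 0}"
  define a where "a = Inf Q"
  have Qne: "Q \<noteq> {}" using p by (auto simp: Q_def)
  have bdd: "bdd_below Q" unfolding bdd_below_def Q_def by (rule exI[of _ 0]) auto
  have a0: "a \<ge> 0" unfolding a_def using Qne by (intro cInf_greatest) (auto simp: Q_def)
  have diffP: "x - y \<in> P" if "x \<in> P" "y \<in> P" for x y
    using P that by (auto simp: rsubg_def simp del: diff_conv_add_uminus) (metis diff_conv_add_uminus)
  show ?thesis
  proof (cases "a > 0")
    case True
    have "a \<in> closure Q" unfolding a_def by (rule closure_contains_Inf[OF Qne bdd])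
    also have "closure Q \<subseteq> P" using P by (intro closure_minimal) (auto simp: Q_def rsubg_def)
    finally have aP: "a \<in> P" .
    have "P = range (\<lambda>j::int. of_int j * a)"
    proof
      show "range (\<lambda>j::int. of_int j * a) \<subseteq> P" using rsubg_int_mult[OF P aP] by auto
    next
      show "P \<subseteq> range (\<lambda>j::int. of_int j * a)"
      proof
        fix t assume t: "t \<in> P"
        define r where "r = t - of_int \<lfloor>t / a\<rfloor> * a"
        have rP: "r \<in> P" unfolding r_def by (rule diffP[OF t rsubg_int_mult[OF P aP]])
        have "of_int \<lfloor>t / a\<rfloor> \<le> t / a" by simp
        then have "of_int \<lfloor>t / a\<rfloor> * a \<le> (t / a) * a" using True by (intro mult_right_mono) auto
        then have "of_int \<lfloor>t / a\<rfloor> * a \<le> t" using True by simp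
        then have r0: "r \<ge> 0" by (simp add: r_def)
        have "t / a < of_int \<lfloor>t / a\<rfloor> + 1" by linarith
        then have "(t / a) * a < (of_int \<lfloor>t / a\<rfloor> + 1) * a" using True by (intro mult_strict_right_mono) auto
        then have "t < (of_int \<lfloor>t / a\<rfloor> + 1) * a" using True by simp
        then have ra: "r < a" by (simp add: r_def algebra_simps)
        have "r = 0"
        proof (rule ccontr)
          assume "r \<noteq> 0"
          then have "r \<in> Q" using r0 rP by (auto simp: Q_def)
          then have "a \<le> r" unfolding a_def by (rule cInf_lower[OF _ bdd])
          then show False using ra by simp
        qed
        then show "t \<in> range (\<lambda>j::int. of_int j * a)" by (auto simp: r_def)
      qed
    qed
    then show ?thesis using True by blast
  next
    case False
    then have a00: "a = 0" using a0 by simp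
    have "x \<in> P" for x
    proof -
      have "\<forall>e>0. \<exists>y\<in>P. dist y x < e"
      proof (intro allI impI)
        fix e :: real assume e: "e > 0"
        then have "Inf Q < e" using a00 a_def by simp
        then obtain q where q: "q \<in> Q" "q < e" using cInf_lessD[OF Qne] by blast
        then have qP: "q \<in> P" "q > 0" by (auto simp: Q_def)
        define y where "y = of_int \<lfloor>x / q\<rfloor> * q"
        have yP: "y \<in> P" unfolding y_def by (rule rsubg_int_mult[OF P qP(1)])
        have "of_int \<lfloor>x / q\<rfloor> \<le> x / q" by simp
        then have "of_int \<lfloor>x / q\<rfloor> * q \<le> (x / q) * q" using qP by (intro mult_right_mono) auto
        then have "y \<le> x" using qP by (simp add: y_def)
        moreover have "x / q < of_int \<lfloor>x / q\<rfloor> + 1" by linarith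
        then have "(x / q) * q < (of_int \<lfloor>x / q\<rfloor> + 1) * q" using qP by (intro mult_strict_right_mono) auto
        then have "x < y + q" using qP by (simp add: y_def algebra_simps)
        ultimately have "dist y x < e" using q by (simp add: dist_real_def)
        then show "\<exists>y\<in>P. dist y x < e" using yP by blast
      qed
      then show ?thesis using closed_approachable P by (auto simp: rsubg_def)
    qed
    then show ?thesis by blast
  qed
qed

lemma additive_linear:
  fixes k :: "real \<Rightarrow> complex"
  assumes add: "\<And>s t. k (s + t) = k s + k t" and cont: "continuous_on UNIV k"
  shows "k t = of_real t * k 1"
proof -
  have k0: "k 0 = 0" using add[of 0 0] by simp
  have kneg: "k (-t) = - k t" for t using add[of t "-t"] k0 by (simp add: eq_neg_iff_add_eq_0 add.commute)
  have knat: "k (of_nat n * t) = of_nat n * k t" for n t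
    by (induction n) (auto simp: k0 add distrib_right)
  have kint: "k (of_int j * t) = of_int j * k t" for j t
  proof (cases "j \<ge> 0")
    case True then show ?thesis using knat[of "nat j" t] by simp
  next
    case False
    have "k (- (of_nat (nat (-j)) * t)) = - k (of_nat (nat (-j)) * t)" by (rule kneg)
    also have "\<dots> = - (of_nat (nat (-j)) * k t)" by (simp only: knat)
    finally have e: "k (- (of_nat (nat (-j)) * t)) = - (of_nat (nat (-j)) * k t)" .
    have "of_int j * t = - (of_nat (nat (-j)) * t)" using False by simp
    moreover have "(of_int j :: complex) = - of_nat (nat (-j))" using False by simp
    ultimately show ?thesis using e by simp
  qed
  have krat: "k r = of_real r * k 1" if rQ: "r \<in> \<rat>" for r
  proof -
    obtain a b :: int where ab: "b > 0" "r = of_int a / of_int b" using Rats_cases'[OF rQ] by blast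
    have "of_int b * k r = k (of_int b * r)" using kint by simp
    also have "of_int b * r = of_int a * 1" using ab by simp
    also have "k (of_int a * 1) = of_int a * k 1" by (rule kint)
    finally have "of_int b * k r = of_int a * k 1" .
    then have "k r = (of_int a / of_int b) * k 1" using ab(1) by (simp add: field_simps)
    moreover have "(of_real r :: complex) = of_int a / of_int b" using ab(2) by simp
    ultimately show ?thesis by simp
  qed
  have cl: "closed {t. k t = of_real t * k 1}"
    by (rule closed_Collect_eq) (rule cont, intro continuous_intros)
  have "\<forall>e>0. \<exists>y\<in>{t. k t = of_real t * k 1}. dist y t < e"
  proof (intro allI impI)
    fix e :: real assume "e > 0"
    then obtain r where r: "r \<in> \<rat>" "t < r" "r < t + e" using Rats_dense_in_real[of t "t + e"] by auto
    have "dist r t < e" using r by (auto simp: dist_real_def)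
    moreover have "r \<in> {t. k t = of_real t * k 1}" using krat[OF r(1)] by simp
    ultimately show "\<exists>y\<in>{t. k t = of_real t * k 1}. dist y t < e" by blast
  qed
  then show ?thesis using closed_approachable[OF cl] by blast
qed

lemma cont_hom_R:
  fixes g :: "real \<Rightarrow> complex"
  assumes cont: "continuous_on UNIV g" and mult: "\<And>s t. g (s + t) = g s * g t"
    and nz: "\<And>t. g t \<noteq> 0"
  shows "\<exists>\<kappa>. \<forall>t. g t = exp (of_real t * \<kappa>)"
proof -
  obtain h where hc: "continuous_on UNIV h" and gh0: "\<And>x. x \<in> UNIV \<Longrightarrow> g x = exp (h x)"
    by (rule continuous_logarithm_on_contractible[OF cont contractible_UNIV]) (use nz in auto)
  have gh: "g x = exp (h x)" for x using gh0 by simp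
  have D: "h (s + t) = h s + h t - h 0" for s t
  proof -
    define D where "D = (\<lambda>s. h (s + t) - h s - h t)"
    have eD: "\<exists>n::int. D s = of_int (2 * n) * pi * \<i>" for s
    proof -
      have "exp (h (s + t)) = exp (h s + h t + 0)" using mult[of s t] gh by (simp add: exp_add)
      then have "\<exists>n::int. h (s + t) = h s + h t + 0 + of_int (2 * n) * pi * \<i>"
        by (simp only: exp_eq)
      then obtain n :: int where "h (s + t) = h s + h t + 0 + of_int (2 * n) * pi * \<i>" ..
      then show ?thesis by (auto simp: D_def)
    qed
    have "D constant_on UNIV"
    proof (rule continuous_discrete_range_constant)
      show "connected (UNIV :: real set)" by simp
      have c1: "continuous_on UNIV (\<lambda>s. h (s + t))"
        by (rule continuous_on_compose2[OF hc]) (auto intro: continuous_intros)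
      show "continuous_on UNIV D" unfolding D_def
        by (intro continuous_on_diff c1 hc continuous_on_const)
      fix x :: real assume "x \<in> UNIV"
      show "\<exists>e>0. \<forall>y. y \<in> UNIV \<and> D y \<noteq> D x \<longrightarrow> e \<le> norm (D y - D x)"
      proof (intro exI[of _ "2 * pi"] conjI allI impI)
        show "0 < 2 * pi" by simp
        fix y assume y: "y \<in> UNIV \<and> D y \<noteq> D x"
        obtain n :: int where n: "D y = of_int (2 * n) * pi * \<i>" using eD by blast
        obtain m :: int where m: "D x = of_int (2 * m) * pi * \<i>" using eD by blast
        have nm: "n \<noteq> m" using y n m by auto
        have eq: "D y - D x = of_real (2 * pi * of_int (n - m)) * \<i>" using n m by (simp add: algebra_simps)
        have "norm (D y - D x) = norm (of_real (2 * pi * of_int (n - m)) * \<i>)" by (simp only: eq)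
        also have "\<dots> = \<bar>2 * pi * of_int (n - m)\<bar>" by (simp only: norm_mult norm_ii norm_of_real mult_1_right)
        finally have "norm (D y - D x) = 2 * pi * \<bar>of_int (n - m)\<bar>" by (simp add: abs_mult)
        moreover have "\<bar>of_int (n - m) :: real\<bar> \<ge> 1" using nm by linarith
        ultimately show "2 * pi \<le> norm (D y - D x)" by simp
      qed
    qed
    then have "D s = D 0" by (auto simp: constant_on_def)
    then have "h (s + t) - h s - h t = - h 0" by (simp add: D_def)
    then show ?thesis by (simp add: algebra_simps)
  qed
  define k where "k = (\<lambda>t. h t - h 0)"
  have kadd: "k (s + t) = k s + k t" for s t using D[of s t] by (simp add: k_def)
  have kc: "continuous_on UNIV k" unfolding k_def by (intro continuous_intros hc)
  have g0: "g 0 = 1" using mult[of 0 0] nz[of 0] by simp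
  have "g t = exp (of_real t * k 1)" for t
  proof -
    have "g t = exp (h 0) * exp (k t)" by (simp add: gh k_def flip: exp_add)
    also have "exp (h 0) = 1" using g0 gh by simp
    finally show ?thesis using additive_linear[OF kadd kc, of t] by simp
  qed
  then show ?thesis by blast
qed

definition csub :: "complex set \<Rightarrow> bool" where
  "csub T \<longleftrightarrow> T \<subseteq> sphere 0 1 \<and> 1 \<in> T \<and> (\<forall>z\<in>T. \<forall>w\<in>T. z * w \<in> T) \<and> (\<forall>z\<in>T. inverse z \<in> T) \<and> closed T"

lemma sphere_cis_Arg:
  assumes "norm z = 1" shows "cis (Arg z) = z"
proof -
  have "z \<noteq> 0" using assms by auto
  then have "cis (Arg z) = sgn z" by (rule cis_Arg)
  also have "sgn z = z" using assms by (simp add: sgn_div_norm)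
  finally show ?thesis .
qed

lemma cis_eq_1_imp: "cis x = 1 \<Longrightarrow> \<exists>n::int. x = 2 * pi * of_int n"
  by (auto simp: cis_conv_exp exp_eq_1)

lemma norm_root_unity: "z ^ m = (1::complex) \<Longrightarrow> m > 0 \<Longrightarrow> norm z = 1"
  using power_eq_1_iff[of z m] by auto

lemma csub_cases:
  assumes T: "csub T"
  shows "T = sphere 0 1 \<or> (\<exists>m::nat. m > 0 \<and> T = {z. z ^ m = 1})"
proof -
  define P where "P = cis -` T"
  have rs: "rsubg P" unfolding rsubg_def P_def
  proof (intro conjI ballI)
    show "closed (cis -` T)" using T continuous_on_closed_vimage[OF closed_UNIV, of cis]
      by (auto simp: csub_def continuous_on_cis continuous_on_id)
    show "0 \<in> cis -` T" using T by (auto simp: csub_def)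
    show "x + y \<in> cis -` T" if "x \<in> cis -` T" "y \<in> cis -` T" for x y
      using T that by (auto simp: csub_def simp flip: cis_mult)
    show "- x \<in> cis -` T" if "x \<in> cis -` T" for x
      using T that by (auto simp: csub_def simp flip: cis_inverse)
  qed
  have twopi: "2 * pi \<in> P" using T by (auto simp: P_def csub_def)
  have ArgP: "z \<in> T \<Longrightarrow> Arg z \<in> P" for z
    using T sphere_cis_Arg[of z] by (auto simp: P_def csub_def)
  have pos: "(0::real) < 2 * pi" by simp
  from rsubg_cases[OF rs twopi pos] show ?thesis
  proof
    assume "P = UNIV"
    then have "sphere 0 1 \<subseteq> T" using sphere_cis_Arg by (force simp: P_def)
    then show ?thesis using T by (auto simp: csub_def)
  next
    assume "\<exists>a>0. P = range (\<lambda>j::int. of_int j * a)"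
    then obtain a where a: "a > 0" "P = range (\<lambda>j::int. of_int j * a)" by blast
    then obtain j0 :: int where j0: "2 * pi = of_int j0 * a" using twopi by auto
    have "of_int j0 * a > 0" using j0[symmetric] by simp
    then have j0p: "j0 > 0" using a by (simp add: zero_less_mult_iff)
    define m where "m = nat j0"
    have m: "m > 0" "real m = of_int j0" using j0p by (auto simp: m_def)
    have "T = {z. z ^ m = 1}"
    proof
      show "T \<subseteq> {z. z ^ m = 1}"
      proof
        fix z assume z: "z \<in> T"
        then obtain j :: int where j: "Arg z = of_int j * a" using ArgP a by auto
        have nz: "norm z = 1" using z T by (auto simp: csub_def)
        have r: "real m * Arg z = 2 * pi * of_int j" by (simp add: j m(2) j0)
        have "z ^ m = cis (Arg z) ^ m" using sphere_cis_Arg[OF nz] by simp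
        also have "\<dots> = cis (real m * Arg z)" by (rule Complex.DeMoivre)
        also have "\<dots> = 1" unfolding r by simp
        finally show "z \<in> {z. z ^ m = 1}" by simp
      qed
    next
      show "{z. z ^ m = 1} \<subseteq> T"
      proof
        fix z :: complex assume "z \<in> {z. z ^ m = 1}"
        then have zm: "z ^ m = 1" by simp
        have nz: "norm z = 1" using norm_root_unity[OF zm m(1)] .
        have "cis (real m * Arg z) = cis (Arg z) ^ m" by (rule Complex.DeMoivre[symmetric])
        also have "\<dots> = 1" using zm sphere_cis_Arg[OF nz] by simp
        finally have "cis (real m * Arg z) = 1" .
        then obtain n :: int where n: "real m * Arg z = 2 * pi * of_int n" using cis_eq_1_imp by blast
        have "real m * (of_int n * a) = of_int n * (of_int j0 * a)" using m(2) by (simp add: mult_ac)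
        also have "\<dots> = 2 * pi * of_int n" by (subst j0) (rule mult.commute)
        finally have e: "real m * (of_int n * a) = 2 * pi * of_int n" .
        have "real m * Arg z = real m * (of_int n * a)" by (simp only: n e)
        then have "Arg z = of_int n * a" using m(1) by simp
        then have "Arg z \<in> P" using a by auto
        then show "z \<in> T" using sphere_cis_Arg[OF nz] by (auto simp: P_def)
      qed
    qed
    then show ?thesis using m by blast
  qed
qed

lemma csub_char:
  assumes T: "csub T" and contf: "continuous_on T f"
    and mult: "\<And>z w. z \<in> T \<Longrightarrow> w \<in> T \<Longrightarrow> f (z * w) = f z * f w"
    and nf: "\<And>z. z \<in> T \<Longrightarrow> norm (f z) = 1"
  shows "\<exists>k::int. \<forall>z\<in>T. f z = z powi k"
proof -
  have T1: "1 \<in> T" using T by (auto simp: csub_def)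
  have f1: "f 1 = 1" using mult[OF T1 T1] nf[OF T1] by (metis mult_cancel_right2 mult_1 norm_zero zero_neq_one)
  from csub_cases[OF T] show ?thesis
  proof
    assume Ts: "T = sphere 0 1"
    define g where "g = (\<lambda>t. f (cis t))"
    have gc: "continuous_on UNIV g" unfolding g_def
      by (rule continuous_on_compose2[OF contf continuous_on_cis[OF continuous_on_id]]) (auto simp: Ts)
    have gm: "g (s + t) = g s * g t" for s t unfolding g_def
      using mult[of "cis s" "cis t"] by (simp add: Ts cis_mult)
    have gnz: "g t \<noteq> 0" for t using nf[of "cis t"] by (auto simp: g_def Ts)
    obtain \<kappa> where kap: "\<And>t. g t = exp (of_real t * \<kappa>)" using cont_hom_R[OF gc gm gnz] by blast
    have "exp (of_real (2 * pi) * \<kappa>) = 1" using kap[of "2 * pi"] f1 by (simp add: g_def)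
    then obtain n :: int where "Re (of_real (2 * pi) * \<kappa>) = 0" "Im (of_real (2 * pi) * \<kappa>) = of_int (2 * n) * pi"
      by (auto simp: exp_eq_1)
    then have "Re \<kappa> = 0" "Im \<kappa> = of_int n" by auto
    then have kn: "\<kappa> = \<i> * of_int n" by (simp add: complex_eq_iff)
    have "f z = z powi n" if z: "z \<in> T" for z
    proof -
      have nz: "norm z = 1" using z Ts by simp
      have "f z = g (Arg z)" using sphere_cis_Arg[OF nz] by (simp add: g_def)
      also have "\<dots> = exp (\<i> * of_real (of_int n * Arg z))" using kap by (simp add: kn mult_ac)
      also have "\<dots> = cis (of_int n * Arg z)" by (simp add: cis_conv_exp)
      also have "\<dots> = cis (Arg z) powi n" by (simp add: cis_power_int)
      also have "\<dots> = z powi n" using sphere_cis_Arg[OF nz] by simp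
      finally show ?thesis .
    qed
    then show ?thesis by blast
  next
    assume "\<exists>m::nat. m > 0 \<and> T = {z. z ^ m = 1}"
    then obtain m :: nat where m: "m > 0" "T = {z. z ^ m = 1}" by blast
    define \<omega> where "\<omega> = exp (2 * of_real pi * \<i> / of_nat m)"
    have ex: "exp (2 * of_real pi * \<i> * of_nat j / of_nat m) = \<omega> ^ j" for j
    proof -
      have "\<omega> ^ j = exp (of_nat j * (2 * of_real pi * \<i> / of_nat m))" unfolding \<omega>_def by (rule exp_of_nat_mult[symmetric])
      also have "of_nat j * (2 * of_real pi * \<i> / of_nat m) = 2 * of_real pi * \<i> * of_nat j / of_nat m" by simp
      finally show ?thesis by simp
    qed
    have roots: "z ^ m = 1 \<Longrightarrow> \<exists>j. z = \<omega> ^ j" for z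
      using complex_roots_unity[of m] m(1) ex by auto
    have om: "\<omega> ^ m = 1" using complex_root_unity[of m 1] m(1) ex[of 1] by simp
    have omT: "\<omega> ^ j \<in> T" for j
    proof -
      have "(\<omega> ^ j) ^ m = (\<omega> ^ m) ^ j" by (metis power_mult mult.commute)
      then show ?thesis using om m(2) by simp
    qed
    have fpow: "f (\<omega> ^ j) = f \<omega> ^ j" for j
    proof (induction j)
      case 0 then show ?case using f1 by simp
    next
      case (Suc j)
      have "f (\<omega> ^ Suc j) = f (\<omega> * \<omega> ^ j)" by simp
      also have "\<dots> = f \<omega> * f (\<omega> ^ j)" using mult[OF omT[of 1, simplified] omT[of j]] .
      finally show ?case using Suc by simp
    qed
    have "f \<omega> ^ m = 1" using fpow[of m] om f1 by simp
    then obtain k where k: "f \<omega> = \<omega> ^ k" using roots by blast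
    have "f z = z powi (int k)" if zT: "z \<in> T" for z
    proof -
      obtain j where "z = \<omega> ^ j" using roots zT m(2) by auto
      moreover have "(\<omega> ^ k) ^ j = (\<omega> ^ j) ^ k" by (metis power_mult mult.commute)
      ultimately show ?thesis using fpow[of j] k by (simp add: power_int_of_nat)
    qed
    then show ?thesis by blast
  qed
qed

definition gsub :: "'g::{topological_group_add, ab_group_add} set \<Rightarrow> bool" where
  "gsub S \<longleftrightarrow> closed S \<and> 0 \<in> S \<and> (\<forall>x\<in>S. \<forall>y\<in>S. x + y \<in> S) \<and> (\<forall>x\<in>S. -x \<in> S)"

lemma char_norm: "is_character c \<Longrightarrow> norm (c x) = 1"
  by (simp add: is_character_def)

lemma char_nz: "is_character c \<Longrightarrow> c x \<noteq> 0"
  using char_norm[of c x] by auto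

lemma char_add: "is_character c \<Longrightarrow> c (x + y) = c x * c y"
  by (simp add: is_character_def)

lemma char_cont: "is_character c \<Longrightarrow> continuous_on UNIV c"
  by (simp add: is_character_def)

lemma char_0: assumes "is_character c" shows "c 0 = 1"
proof -
  have "c 0 * 1 = c 0 * c 0" using char_add[OF assms, of 0 0] by simp
  then show ?thesis using char_nz[OF assms, of 0] by (metis mult_left_cancel)
qed

lemma char_neg: assumes "is_character c" shows "c (-x) = inverse (c x)"
proof -
  have "c x * c (-x) = 1" using char_add[OF assms, of x "-x"] char_0[OF assms] by simp
  then show ?thesis using char_nz[OF assms, of x] by (simp add: field_simps)
qed

lemma char_one: "is_character (\<lambda>x. 1)"
  by (simp add: is_character_def)

lemma char_mult: "is_character c \<Longrightarrow> is_character d \<Longrightarrow> is_character (\<lambda>x. c x * d x)"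
  unfolding is_character_def by (auto simp: norm_mult intro: continuous_intros)

lemma char_inv: assumes "is_character c" shows "is_character (\<lambda>x. inverse (c x))"
  unfolding is_character_def
proof (intro conjI allI)
  show "continuous_on UNIV (\<lambda>x. inverse (c x))"
    by (intro continuous_on_inverse char_cont[OF assms]) (use char_nz[OF assms] in auto)
  show "norm (inverse (c x)) = 1" for x using char_norm[OF assms, of x] by (simp add: norm_inverse)
  show "inverse (c (x + y)) = inverse (c x) * inverse (c y)" for x y
    using char_add[OF assms, of x y] by simp
qed

lemma gen_char:
  assumes "\<forall>c\<in>F. is_character c" "\<psi> \<in> gen_subgroup F" shows "is_character \<psi>"
  using assms(2) by induction (use assms(1) char_one char_mult char_inv in auto)

lemma gen_mono:
  assumes "\<psi> \<in> gen_subgroup F" "F \<subseteq> F'" shows "\<psi> \<in> gen_subgroup F'"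
  using assms(1) by induction (use assms(2) in \<open>auto intro: gen_subgroup.intros\<close>)

lemma gen_pow:
  assumes "c \<in> gen_subgroup F" shows "(\<lambda>x. c x ^ n) \<in> gen_subgroup F"
proof (induction n)
  case 0 then show ?case using gen_subgroup.one by simp
next
  case (Suc n)
  have "(\<lambda>x. c x * (\<lambda>x. c x ^ n) x) \<in> gen_subgroup F" by (rule gen_subgroup.mult[OF assms Suc])
  then show ?case by simp
qed

lemma gen_powi:
  assumes "c \<in> gen_subgroup F" shows "(\<lambda>x. c x powi k) \<in> gen_subgroup F"
proof (cases "k \<ge> 0")
  case True
  then have "(\<lambda>x. c x powi k) = (\<lambda>x. c x ^ nat k)" by (simp add: power_int_def)
  then show ?thesis using gen_pow[OF assms] by simp
next
  case False
  then have "(\<lambda>x. c x powi k) = (\<lambda>x. inverse ((\<lambda>x. c x ^ nat (-k)) x))"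
    by (simp add: power_int_def power_inverse)
  then show ?thesis using gen_subgroup.inv[OF gen_pow[OF assms]] by simp
qed

lemma gsub_compact: "compact (UNIV :: 'g set) \<Longrightarrow> gsub (S :: 'g::{topological_group_add, ab_group_add} set) \<Longrightarrow> compact S"
  using compact_Int_closed[of UNIV S] by (simp add: gsub_def)

lemma char_image_csub:
  fixes S :: "'g::{topological_group_add, ab_group_add, t2_space} set"
  assumes cpt: "compact (UNIV :: 'g set)" and S: "gsub S" and c: "is_character c"
  shows "csub (c ` S)"
  unfolding csub_def
proof (intro conjI ballI)
  show "c ` S \<subseteq> sphere 0 1" using char_norm[OF c] by auto
  show "1 \<in> c ` S" using S char_0[OF c] by (auto simp: gsub_def intro!: image_eqI[of _ _ 0])
  show "z * w \<in> c ` S" if zw: "z \<in> c ` S" "w \<in> c ` S" for z w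
  proof -
    obtain x y where "x \<in> S" "y \<in> S" "z = c x" "w = c y" using zw by auto
    then show ?thesis using S char_add[OF c, of x y] by (auto simp: gsub_def intro!: image_eqI[of _ _ "x + y"])
  qed
  show "inverse z \<in> c ` S" if zS: "z \<in> c ` S" for z
  proof -
    obtain x where "x \<in> S" "z = c x" using zS by auto
    then show ?thesis using S char_neg[OF c, of x] by (auto simp: gsub_def intro!: image_eqI[of _ _ "-x"])
  qed
  show "closed (c ` S)"
    by (intro compact_imp_closed compact_continuous_image gsub_compact[OF cpt S]
        continuous_on_subset[OF char_cont[OF c]]) auto
qed

lemma one_char:
  fixes S :: "'g::{topological_group_add, ab_group_add, t2_space} set"
  assumes cpt: "compact (UNIV :: 'g set)" and S: "gsub S" and c: "is_character c" and ch: "is_character \<eta>"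
    and triv: "\<And>x. x \<in> S \<Longrightarrow> c x = 1 \<Longrightarrow> \<eta> x = 1"
  shows "\<exists>k::int. \<forall>x\<in>S. \<eta> x = c x powi k"
proof -
  define T where "T = c ` S"
  have T: "csub T" unfolding T_def by (rule char_image_csub[OF cpt S c])
  have Tcl: "closed T" using T by (simp add: csub_def)
  define r where "r = (\<lambda>z. SOME s. s \<in> S \<and> c s = z)"
  define f where "f = (\<lambda>z. \<eta> (r z))"
  have rS: "r (c s) \<in> S \<and> c (r (c s)) = c s" if "s \<in> S" for s
    unfolding r_def by (rule someI[of _ s]) (use that in auto)
  have key: "f (c s) = \<eta> s" if s: "s \<in> S" for s
  proof -
    define s' where "s' = r (c s)"
    have s': "s' \<in> S" "c s' = c s" using rS[OF s] by (auto simp: s'_def)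
    have ns: "- s \<in> S" using S s by (simp add: gsub_def)
    have d: "s' + - s \<in> S" using S s'(1) ns unfolding gsub_def by blast
    have "c (s' + - s) = c s * inverse (c s)" by (simp only: char_add[OF c] char_neg[OF c] s'(2))
    then have "c (s' + - s) = 1" using char_nz[OF c, of s] by simp
    then have "\<eta> (s' + - s) = 1" using triv d by blast
    moreover have "\<eta> (s' + - s) = \<eta> s' * inverse (\<eta> s)" by (simp only: char_add[OF ch] char_neg[OF ch])
    ultimately have "\<eta> s' * inverse (\<eta> s) = 1" by simp
    then have "\<eta> s' = \<eta> s" using char_nz[OF ch, of s] by (simp add: field_simps)
    then show ?thesis by (simp add: f_def s'_def)
  qed
  have contf: "continuous_on T f"
    unfolding continuous_on_closed_vimage[OF Tcl]
  proof (intro allI impI)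
    fix C :: "complex set" assume C: "closed C"
    have eq: "T \<inter> f -` C = c ` (S \<inter> \<eta> -` C)"
    proof
      show "T \<inter> f -` C \<subseteq> c ` (S \<inter> \<eta> -` C)"
      proof
        fix z assume z: "z \<in> T \<inter> f -` C"
        then obtain s where s: "s \<in> S" "z = c s" by (auto simp: T_def)
        then have "\<eta> s \<in> C" using z key[OF s(1)] by simp
        then show "z \<in> c ` (S \<inter> \<eta> -` C)" using s by blast
      qed
    next
      show "c ` (S \<inter> \<eta> -` C) \<subseteq> T \<inter> f -` C"
      proof
        fix z assume "z \<in> c ` (S \<inter> \<eta> -` C)"
        then obtain s where s: "s \<in> S" "\<eta> s \<in> C" "z = c s" by blast
        then have "f z \<in> C" using key[OF s(1)] by simp
        then show "z \<in> T \<inter> f -` C" using s by (auto simp: T_def)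
      qed
    qed
    have "\<forall>t. closed t \<longrightarrow> closed (UNIV \<inter> \<eta> -` t)"
      using continuous_on_closed_vimage[OF closed_UNIV, of \<eta>] char_cont[OF ch] by simp
    then have c1: "closed (\<eta> -` C)" using C by simp
    have c2: "closed S" using S by (simp add: gsub_def)
    have "closed (S \<inter> \<eta> -` C)" by (rule closed_Int[OF c2 c1])
    then have "compact (UNIV \<inter> (S \<inter> \<eta> -` C))" by (rule compact_Int_closed[OF cpt])
    then have "compact (S \<inter> \<eta> -` C)" by simp
    then have "compact (c ` (S \<inter> \<eta> -` C))"
      by (intro compact_continuous_image continuous_on_subset[OF char_cont[OF c]]) auto
    then have "closed (T \<inter> f -` C)" unfolding eq by (rule compact_imp_closed)
    then show "closed (f -` C \<inter> T)" by (simp add: Int_commute)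
  qed
  have fm: "f (z * w) = f z * f w" if zw: "z \<in> T" "w \<in> T" for z w
  proof -
    obtain x y where xy: "x \<in> S" "y \<in> S" "z = c x" "w = c y" using zw by (auto simp: T_def)
    have xyS: "x + y \<in> S" using S xy by (auto simp: gsub_def)
    have "f (z * w) = f (c (x + y))" using xy char_add[OF c, of x y] by simp
    also have "\<dots> = \<eta> (x + y)" by (rule key[OF xyS])
    also have "\<dots> = f z * f w" using xy key char_add[OF ch, of x y] by simp
    finally show ?thesis .
  qed
  have fn: "norm (f z) = 1" if "z \<in> T" for z
    using that key char_norm[OF ch] by (auto simp: T_def)
  obtain k where k: "\<forall>z\<in>T. f z = z powi k" using csub_char[OF T contf fm fn] by blast
  have "\<eta> x = c x powi k" if "x \<in> S" for x
    using k key[OF that] that by (auto simp: T_def)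
  then show ?thesis by blast
qed

lemma key_finite:
  fixes F :: "('g::{topological_group_add, ab_group_add, t2_space} \<Rightarrow> complex) set"
  assumes cpt: "compact (UNIV :: 'g set)" and fin: "finite F" and chF: "\<forall>c\<in>F. is_character c"
  shows "gsub S \<Longrightarrow> is_character \<eta> \<Longrightarrow> (\<forall>x\<in>S. (\<forall>c\<in>F. c x = 1) \<longrightarrow> \<eta> x = 1)
    \<Longrightarrow> \<exists>\<psi>\<in>gen_subgroup F. \<forall>x\<in>S. \<eta> x = \<psi> x"
  using fin chF
proof (induction F arbitrary: S \<eta> rule: finite_induct)
  case empty
  show ?case by (rule bexI[of _ "\<lambda>x. 1"]) (use empty in \<open>auto intro: gen_subgroup.one\<close>)
next
  case (insert c F)
  have c: "is_character c" using insert.prems by simp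
  have chF: "\<forall>c\<in>F. is_character c" using insert.prems by simp
  define S' where "S' = S \<inter> {x. c x = 1}"
  have clc: "closed {x. c x = 1}"
    by (rule closed_Collect_eq) (rule char_cont[OF c], rule continuous_on_const)
  have S': "gsub S'" using insert.prems(1) clc char_0[OF c] char_add[OF c] char_neg[OF c]
    by (auto simp: gsub_def S'_def intro: closed_Int)
  have "\<forall>x\<in>S'. (\<forall>c\<in>F. c x = 1) \<longrightarrow> \<eta> x = 1" using insert.prems(3) by (auto simp: S'_def)
  then obtain \<psi> where \<psi>: "\<psi> \<in> gen_subgroup F" "\<forall>x\<in>S'. \<eta> x = \<psi> x"
    using insert.IH[OF S' insert.prems(2) _ chF] by blast
  have ch\<psi>: "is_character \<psi>" by (rule gen_char[OF chF \<psi>(1)])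
  define \<eta>' where "\<eta>' = (\<lambda>x. \<eta> x * inverse (\<psi> x))"
  have ch': "is_character \<eta>'" unfolding \<eta>'_def by (intro char_mult char_inv insert.prems(2) ch\<psi>)
  have triv': "\<eta>' x = 1" if "x \<in> S" "c x = 1" for x
  proof -
    have "x \<in> S'" using that by (simp add: S'_def)
    then have "\<eta> x = \<psi> x" using \<psi>(2) by blast
    then show ?thesis using char_nz[OF ch\<psi>, of x] by (simp add: \<eta>'_def)
  qed
  obtain k where k: "\<forall>x\<in>S. \<eta>' x = c x powi k"
    using one_char[OF cpt insert.prems(1) c ch' triv'] by blast
  have eqS: "\<forall>x\<in>S. \<eta> x = \<psi> x * c x powi k"
  proof
    fix x assume "x \<in> S"
    then have "\<eta> x * inverse (\<psi> x) = c x powi k" using k by (simp add: \<eta>'_def)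
    then show "\<eta> x = \<psi> x * c x powi k" using char_nz[OF ch\<psi>, of x] by (simp add: field_simps)
  qed
  have "c \<in> gen_subgroup (insert c F)" by (rule gen_subgroup.base) simp
  then have p: "(\<lambda>x. c x powi k) \<in> gen_subgroup (insert c F)" by (rule gen_powi)
  have q: "\<psi> \<in> gen_subgroup (insert c F)" by (rule gen_mono[OF \<psi>(1)]) auto
  have "(\<lambda>x. \<psi> x * (\<lambda>x. c x powi k) x) \<in> gen_subgroup (insert c F)"
    by (rule gen_subgroup.mult[OF q p])
  then show ?case using eqS by auto
qed

theorem corollary2p6:
  fixes E :: "('g::{topological_group_add, ab_group_add, t2_space} \<Rightarrow> complex) set"
    and \<gamma> :: "'g \<Rightarrow> complex" and N :: nat
  assumes "compact (UNIV :: 'g set)"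
    and "N \<ge> 1"
    and "E \<subseteq> dual_group"
    and "N_PR N E"
    and "\<gamma> \<in> dual_group"
    and "gen_subgroup E \<inter> gen_subgroup {\<gamma>} = {(\<lambda>x. 1)}"
  shows "N_PR N (translate_set \<gamma> E)"
proof -
  note cpt = assms(1)
  have chE: "\<forall>c\<in>E. is_character c" using assms(3) by (auto simp: dual_group_def)
  have ch\<gamma>: "is_character \<gamma>" using assms(5) by (simp add: dual_group_def)
  show ?thesis unfolding N_PR_def
  proof (intro allI impI)
    fix \<phi> assume \<phi>: "\<forall>d\<in>translate_set \<gamma> E. \<phi> d \<in> roots_of_unity N"
    define \<phi>' where "\<phi>' = (\<lambda>c. \<phi> (\<lambda>x. \<gamma> x * c x))"
    have "\<forall>c\<in>E. \<phi>' c \<in> roots_of_unity N" using \<phi> by (auto simp: translate_set_def \<phi>'_def)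
    then obtain x0 where x0: "\<forall>c\<in>E. \<phi>' c = c x0" using assms(4) unfolding N_PR_def by blast
    define X where "X = (\<lambda>c. {x. \<gamma> x * c x = \<phi>' c})"
    have Xcl: "closed (X c)" if "c \<in> E" for c
      unfolding X_def
      by (rule closed_Collect_eq) (intro continuous_on_mult char_cont ch\<gamma>, use chE that in simp, rule continuous_on_const)
    have fip: "UNIV \<inter> (\<Inter>c\<in>F. X c) \<noteq> {}" if F: "finite F" "F \<subseteq> E" for F
    proof -
      have chF: "\<forall>c\<in>F. is_character c" using chE F by auto
      define A where "A = {y. \<forall>c\<in>F. c y = 1}"
      have Aeq: "A = (\<Inter>c\<in>F. c -` {1})" by (auto simp: A_def)
      have cl1: "closed (c -` {1})" if cF: "c \<in> F" for c
      proof -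
        have "continuous_on UNIV c" using chF char_cont cF by blast
        then have "\<forall>t. closed t \<longrightarrow> closed (c -` t \<inter> UNIV)"
          using continuous_on_closed_vimage[OF closed_UNIV, of c] by simp
        then show "closed (c -` {1})" by simp
      qed
      have Acl: "closed A" unfolding Aeq by (intro closed_INT) (use cl1 in auto)
      have A: "gsub A" unfolding gsub_def
      proof (intro conjI ballI)
        show "closed A" by (rule Acl)
        show "0 \<in> A" using chF char_0 by (auto simp: A_def)
        show "x + y \<in> A" if "x \<in> A" "y \<in> A" for x y
        proof -
          have "c (x + y) = 1" if cF: "c \<in> F" for c
          proof -
            have "c x = 1" "c y = 1" using cF \<open>x \<in> A\<close> \<open>y \<in> A\<close> by (auto simp: A_def)
            then show ?thesis using char_add[of c x y] chF cF by simp
          qed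
          then show ?thesis by (simp add: A_def)
        qed
        show "- x \<in> A" if xA: "x \<in> A" for x
        proof -
          have "c (- x) = 1" if cF: "c \<in> F" for c
          proof -
            have "c x = 1" using cF xA by (auto simp: A_def)
            then show ?thesis using char_neg[of c x] chF cF by simp
          qed
          then show ?thesis by (simp add: A_def)
        qed
      qed
      have claim: "\<exists>y\<in>A. \<gamma> y = inverse (\<gamma> x0)"
      proof (rule ccontr)
        assume nA: "\<not> (\<exists>y\<in>A. \<gamma> y = inverse (\<gamma> x0))"
        define T where "T = \<gamma> ` A"
        have T: "csub T" unfolding T_def by (rule char_image_csub[OF cpt A ch\<gamma>])
        have nT: "inverse (\<gamma> x0) \<notin> T" using nA by (auto simp: T_def)
        have nrm: "norm (inverse (\<gamma> x0)) = 1" using char_norm[OF ch\<gamma>] by (simp add: norm_inverse)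
        from csub_cases[OF T] show False
        proof
          assume "T = sphere 0 1"
          then show False using nT nrm by simp
        next
          assume "\<exists>m::nat. m > 0 \<and> T = {z. z ^ m = 1}"
          then obtain m :: nat where m: "m > 0" "T = {z. z ^ m = 1}" by blast
          have ne: "inverse (\<gamma> x0) ^ m \<noteq> 1" using nT m(2) by simp
          have g\<gamma>: "\<gamma> \<in> gen_subgroup {\<gamma>}" by (rule gen_subgroup.base) simp
          have pm: "(\<lambda>x. \<gamma> x ^ m) \<in> gen_subgroup {\<gamma>}" by (rule gen_pow[OF g\<gamma>])
          have chm: "is_character (\<lambda>x. \<gamma> x ^ m)" by (rule gen_char[OF _ pm]) (use ch\<gamma> in simp)
          have triv: "\<forall>x\<in>UNIV. (\<forall>c\<in>F. c x = 1) \<longrightarrow> \<gamma> x ^ m = 1"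
          proof (intro ballI impI)
            fix x assume "\<forall>c\<in>F. c x = 1"
            then have "x \<in> A" by (simp add: A_def)
            then have "\<gamma> x \<in> T" by (simp add: T_def)
            then show "\<gamma> x ^ m = 1" using m(2) by simp
          qed
          have gU: "gsub (UNIV :: 'g set)" by (simp add: gsub_def)
          obtain \<psi> where \<psi>: "\<psi> \<in> gen_subgroup F" "\<forall>x\<in>UNIV. \<gamma> x ^ m = \<psi> x"
            using key_finite[OF cpt F(1) chF gU chm triv] by blast
          have "(\<lambda>x. \<gamma> x ^ m) = \<psi>" using \<psi>(2) by auto
          then have "(\<lambda>x. \<gamma> x ^ m) \<in> gen_subgroup E" using gen_mono[OF \<psi>(1) F(2)] by simp
          then have "(\<lambda>x. \<gamma> x ^ m) \<in> gen_subgroup E \<inter> gen_subgroup {\<gamma>}" using pm by simp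
          then have "(\<lambda>x. \<gamma> x ^ m) = (\<lambda>x. 1)" using assms(6) by simp
          then have "\<gamma> x0 ^ m = 1" by (metis (mono_tags))
          then have "inverse (\<gamma> x0) ^ m = 1" by (simp add: power_inverse)
          then show False using ne by simp
        qed
      qed
      then obtain y where y: "y \<in> A" "\<gamma> y = inverse (\<gamma> x0)" by blast
      have "x0 + y \<in> X c" if "c \<in> F" for c
      proof -
        have ch: "is_character c" using chF that by blast
        have cy: "c y = 1" using y(1) that by (simp add: A_def)
        have "\<gamma> (x0 + y) * c (x0 + y) = (\<gamma> x0 * \<gamma> y) * (c x0 * c y)"
          using char_add[OF ch\<gamma>] char_add[OF ch] by simp
        also have "\<dots> = c x0" using y(2) cy char_nz[OF ch\<gamma>, of x0] by simp
        also have "\<dots> = \<phi>' c" using x0 that F(2) by auto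
        finally show ?thesis by (simp add: X_def)
      qed
      then show ?thesis by blast
    qed
    have "UNIV \<inter> (\<Inter>c\<in>E. X c) \<noteq> {}"
      by (rule compact_imp_fip_image[OF cpt Xcl fip]) auto
    then obtain x where x: "\<forall>c\<in>E. x \<in> X c" by blast
    show "\<exists>x. \<forall>d\<in>translate_set \<gamma> E. \<phi> d = d x"
    proof (intro exI ballI)
      fix d assume "d \<in> translate_set \<gamma> E"
      then obtain c where c: "c \<in> E" "d = (\<lambda>x. \<gamma> x * c x)" by (auto simp: translate_set_def)
      then show "\<phi> d = d x" using x by (auto simp: X_def \<phi>'_def)
    qed
  qed
qed

end
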